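(* Let $m$ be a positive integer and $0<\theta<1$. For each positive integer $n$ let $\phi_n$ be the unique root in $(0,1)$ of $\phi^{n+1}+\phi^n-1$, and set $\phi_0=0$. If $\theta\in[\phi_{m-1}^2,\phi_m^2]$ (with $\theta>0$), then $L_m(\theta)\le L_{m'}(\theta)$ for every positive integer $m'$, i.e. $m$ is an optimal coding parameter at precision $\rho/\tau\to0$.
   Context: $\lg$ denotes $\log_2$. For a positive integer $m$ and $0<\theta<1$, the asymptotic (precision $\rho/\tau\to0$) average code length of the modified Rice-Golomb code for Laplace-distributed residuals is $$L_m(\theta)=\begin{cases}1+\lg m+\dfrac{\theta^{m/2}}{1-\theta^{m/2}}, & m=2^\beta \text{ for some integer } \beta\ge0,\\[2mm] 1+\lfloor\lg m\rfloor+\dfrac{\theta^{(2^{\lceil\lg m\rceil}-m)/2}}{1-\theta^{m/2}}, & \text{otherwise.}\end{cases}$$ *)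

theory Defs
  imports "HOL-Analysis.Analysis"
begin

text \<open>Asymptotic average code length of the modified Rice-Golomb code.\<close>
definition Lcode :: "nat \<Rightarrow> real \<Rightarrow> real" where
  "Lcode m \<theta> =
    (if \<exists>\<beta>::nat. m = 2 ^ \<beta>
     then 1 + log 2 (real m) + \<theta> powr (real m / 2) / (1 - \<theta> powr (real m / 2))
     else 1 + real_of_int \<lfloor>log 2 (real m)\<rfloor>
            + \<theta> powr ((2 powr real_of_int \<lceil>log 2 (real m)\<rceil> - real m) / 2)
              / (1 - \<theta> powr (real m / 2)))"

definition phi :: "nat \<Rightarrow> real" where
  "phi n = (if n = 0 then 0
            else (THE x. 0 < x \<and> x < 1 \<and> x ^ (n + 1) + x ^ n - 1 = 0))"

end

theory Submission
  imports Defs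
begin

lemma powr_half_nat: "0 < (t::real) \<Longrightarrow> t powr (real j / 2) = sqrt t ^ j"
proof -
  assume t: "0 < t"
  have "sqrt t ^ j = (t powr (1/2)) powr real j"
    using t by (simp add: powr_half_sqrt powr_realpow)
  also have "\<dots> = t powr (real j / 2)" by (simp add: powr_powr)
  finally show ?thesis by simp
qed

lemma Lcode_eq:
  assumes k: "2^k \<le> n" "n < (2::nat)^(k+1)" and t: "0 < \<theta>"
  shows "Lcode n \<theta> = real k + 1 + sqrt \<theta> ^ (2^(k+1) - n) / (1 - sqrt \<theta> ^ n)"
proof (cases "\<exists>\<beta>::nat. n = 2 ^ \<beta>")
  case True
  then obtain b where b: "n = 2^b" by blast
  have "b = k"
  proof -
    have "k \<le> b" using k b by simp
    moreover have "b < k+1" using k b by (metis power_strict_increasing_iff one_less_numeral_iff semiring_norm(76))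
    ultimately show ?thesis by simp
  qed
  have e: "2^(k+1) - n = n" using b \<open>b = k\<close> by simp
  show ?thesis using True b \<open>b = k\<close> e
    by (simp add: Lcode_def powr_half_nat[OF t, symmetric] log_nat_power)
next
  case False
  have n0: "n > 0" using k by (metis le_less_trans less_numeral_extra(1) one_le_power not_le zero_less_numeral not_less_zero le0 pos2 zero_less_power)
  have kl: "2^k < n" using k False by (metis le_neq_implies_less)
  have fl: "\<lfloor>log 2 (real n)\<rfloor> = int k"
    using floor_log_nat_eq_powr_iff[of 2 n k] k n0 by simp
  have cl: "\<lceil>log 2 (real n)\<rceil> = int k + 1"
    using ceiling_log_nat_eq_powr_iff[of 2 n k] kl k n0 by simp
  have p: "(2::real) powr real_of_int (int k + 1) = real (2^(k+1))"
    by (metis of_int_of_nat_eq of_nat_Suc of_nat_numeral of_nat_power powr_realpow zero_less_numeral Suc_eq_plus1 of_nat_add of_nat_1 add.commute)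
  have q: "(real (2^(k+1)) - real n) / 2 = real (2^(k+1) - n) / 2"
    using k by (simp add: of_nat_diff)
  show ?thesis using False
    unfolding Lcode_def fl cl p q
    by (simp add: powr_half_nat[OF t])
qed


lemma alg1:
  fixes r :: real assumes "0<r" "r<1" "n \<ge> 1"
  shows "r^c/(1-r^(n+1)) - r^(c+1)/(1-r^n) = r^c*(1-r)/((1-r^n)*(1-r^(n+1))) * (1 - r^n - r^(n+1))"
proof -
  have a: "r^n < 1" using power_strict_decreasing[of 0 n r] assms by simp
  have b: "r^(n+1) < 1" using power_strict_decreasing[of 0 "n+1" r] assms by simp
  show ?thesis using a b by (simp add: field_simps)
qed

lemma alg2:
  fixes r :: real assumes "0<r" "r<1" "n \<ge> 1"
  shows "1 + r^(n+1)/(1-r^(n+1)) - r/(1-r^n) = (1-r)/((1-r^n)*(1-r^(n+1))) * (1 - r^n - r^(n+1))"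
proof -
  have a: "r^n < 1" using power_strict_decreasing[of 0 n r] assms by simp
  have b: "r^(n+1) < 1" using power_strict_decreasing[of 0 "n+1" r] assms by simp
  show ?thesis using a b by (simp add: field_simps)
qed

lemma step_lemma:
  assumes n: "n \<ge> 1" and t: "0 < \<theta>" "\<theta> < 1"
  shows "\<exists>P>0. Lcode (n+1) \<theta> - Lcode n \<theta> = P * (1 - sqrt \<theta> ^ n - sqrt \<theta> ^ (n+1))"
proof -
  define r where "r = sqrt \<theta>"
  have r: "0 < r" "r < 1" using t by (auto simp: r_def)
  have a: "r^n < 1" using r n by (simp add: power_less_one_iff)
  have b: "r^(n+1) < 1" using power_strict_decreasing[of 0 "n+1" r] r by simp
  obtain k where k: "2^k \<le> n" "n < (2::nat)^(k+1)" using ex_power_ivl1[of 2 n] n by auto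
  show ?thesis
  proof (cases "n+1 < 2^(k+1)")
    case True
    define c where "c = 2^(k+1) - (n+1)"
    have c1: "2^(k+1) - n = c + 1" using True by (simp add: c_def)
    have "Lcode (n+1) \<theta> - Lcode n \<theta> = r^c/(1-r^(n+1)) - r^(c+1)/(1-r^n)"
    proof -
      have "2^k \<le> n+1" using k by simp
      from Lcode_eq[OF this True t(1)] Lcode_eq[OF k t(1)] c1 show ?thesis
        by (simp add: r_def c_def)
    qed
    also have "\<dots> = r^c*(1-r)/((1-r^n)*(1-r^(n+1))) * (1 - r^n - r^(n+1))" by (rule alg1[OF r n])
    finally show ?thesis using r a b unfolding r_def
      by (intro exI[of _ "r^c*(1-r)/((1-r^n)*(1-r^(n+1)))"]) (auto simp: r_def)
  next
    case False
    hence e: "n+1 = 2^(k+1)" using k by simp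
    have k2: "2^(k+1) \<le> n+1" "n+1 < (2::nat)^(k+1+1)" using e by auto
    have e2: "2^(k+1+1) - (n+1) = n+1" using e by simp
    have e3: "2^(k+1) - n = 1" using e by simp
    have "Lcode (n+1) \<theta> - Lcode n \<theta> = 1 + r^(n+1)/(1-r^(n+1)) - r/(1-r^n)"
      using Lcode_eq[OF k2 t(1)] Lcode_eq[OF k t(1)] e2 e3 by (simp add: r_def)
    also have "\<dots> = (1-r)/((1-r^n)*(1-r^(n+1))) * (1 - r^n - r^(n+1))" by (rule alg2[OF r n])
    finally show ?thesis using r a b unfolding r_def
      by (intro exI[of _ "(1-r)/((1-r^n)*(1-r^(n+1)))"]) (auto simp: r_def)
  qed
qed


lemma phi_prop:
  assumes n: "n \<ge> 1"
  shows "0 < phi n \<and> phi n < 1 \<and> phi n ^ (n+1) + phi n ^ n = 1"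
proof -
  define f where "f = (\<lambda>x::real. x ^ (n + 1) + x ^ n - 1)"
  have "\<exists>x\<ge>0. x \<le> 1 \<and> f x = 0"
    by (rule IVT) (use n in \<open>auto simp: f_def power_0_left intro!: continuous_intros\<close>)
  then obtain x where x: "0 \<le> x" "x \<le> 1" "f x = 0" by blast
  have x0: "x \<noteq> 0" using x n by (auto simp: f_def power_0_left)
  have x1: "x \<noteq> 1" using x by (auto simp: f_def)
  have ex: "0 < x \<and> x < 1 \<and> x ^ (n + 1) + x ^ n - 1 = 0" using x x0 x1 by (auto simp: f_def)
  have uniq: "y = x" if y: "0 < y \<and> y < 1 \<and> y ^ (n + 1) + y ^ n - 1 = 0" for y
  proof (rule ccontr)
    assume "y \<noteq> x"
    then consider "y < x" | "x < y" by linarith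
    then show False
    proof cases
      case 1
      have "y^(n+1) < x^(n+1)" "y^n < x^n" using power_strict_mono[of y x "n+1"] power_strict_mono[of y x n] 1 y n by auto
      then show False using y ex by linarith
    next
      case 2
      have "x^(n+1) < y^(n+1)" "x^n < y^n" using power_strict_mono[of x y "n+1"] power_strict_mono[of x y n] 2 ex n by auto
      then show False using y ex by linarith
    qed
  qed
  have "phi n = x" unfolding phi_def using n
    using the_equality[of "\<lambda>y. 0 < y \<and> y < 1 \<and> y ^ (n + 1) + y ^ n - 1 = 0" x, OF ex uniq] by simp
  thus ?thesis using ex by simp
qed

theorem theorem3:
  fixes m :: nat and \<theta> :: real
  assumes "m \<ge> 1" and "0 < \<theta>" and "\<theta> < 1"
    and "(phi (m - 1))\<^sup>2 \<le> \<theta>" and "\<theta> \<le> (phi m)\<^sup>2"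
  shows "\<forall>m'::nat. m' \<ge> 1 \<longrightarrow> Lcode m \<theta> \<le> Lcode m' \<theta>"
proof -
  define r where "r = sqrt \<theta>"
  have r: "0 < r" "r < 1" using assms by (auto simp: r_def)
  define p where "p = phi m"
  have p: "0 < p" "p < 1" "p^(m+1) + p^m = 1" using phi_prop[OF assms(1)] by (auto simp: p_def)
  have rp: "r \<le> p"
  proof -
    have "r \<le> sqrt (p^2)" unfolding r_def p_def using assms(5) by (rule real_sqrt_le_mono)
    thus ?thesis using p by simp
  qed
  have up: "Lcode m \<theta> \<le> Lcode n \<theta>" if "m \<le> n" for n
    using that
  proof (induction n rule: dec_induct)
    case base then show ?case by simp
  next
    case (step n)
    have n1: "n \<ge> 1" using step assms(1) by simp
    obtain P where P: "P > 0" "Lcode (n+1) \<theta> - Lcode n \<theta> = P * (1 - r^n - r^(n+1))"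
      using step_lemma[OF n1 assms(2,3)] unfolding r_def by blast
    have "r^n \<le> r^m" "r^(n+1) \<le> r^(m+1)" using r step(1) by (auto intro!: power_decreasing)
    moreover have "r^m \<le> p^m" "r^(m+1) \<le> p^(m+1)" using power_mono[of r p m] power_mono[of r p "m+1"] r rp by auto
    ultimately have "0 \<le> 1 - r^n - r^(n+1)" using p by linarith
    hence "0 \<le> P * (1 - r^n - r^(n+1))" using P by simp
    then show ?case using P step.IH by simp
  qed
  have down: "Lcode m \<theta> \<le> Lcode (m - j) \<theta>" if "j < m" for j
    using that
  proof (induction j)
    case 0 then show ?case by simp
  next
    case (Suc j)
    define n where "n = m - Suc j"
    have n1: "n \<ge> 1" and nm: "n + 1 = m - j" "n \<le> m - 1" using Suc.prems by (auto simp: n_def)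
    have m2: "m - 1 \<ge> 1" using n1 nm by simp
    define q where "q = phi (m-1)"
    have q: "0 < q" "q < 1" "q^(m-1+1) + q^(m-1) = 1" using phi_prop[OF m2] by (auto simp: q_def)
    have qr: "q \<le> r"
    proof -
      have "sqrt (q^2) \<le> r" unfolding r_def q_def using assms(4) by (rule real_sqrt_le_mono)
      thus ?thesis using q by simp
    qed
    obtain P where P: "P > 0" "Lcode (n+1) \<theta> - Lcode n \<theta> = P * (1 - r^n - r^(n+1))"
      using step_lemma[OF n1 assms(2,3)] unfolding r_def by blast
    have "r^(m-1) \<le> r^n" "r^(m-1+1) \<le> r^(n+1)" using r nm by (auto intro!: power_decreasing)
    moreover have "q^(m-1) \<le> r^(m-1)" "q^(m-1+1) \<le> r^(m-1+1)" using power_mono[of q r "m-1"] power_mono[of q r "m-1+1"] q qr by auto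
    ultimately have "1 - r^n - r^(n+1) \<le> 0" using q by linarith
    hence "P * (1 - r^n - r^(n+1)) \<le> 0" using P by (simp add: mult_nonneg_nonpos)
    then have "Lcode n \<theta> \<ge> Lcode (n+1) \<theta>" using P by simp
    moreover have "Lcode m \<theta> \<le> Lcode (n+1) \<theta>" using Suc nm by simp
    ultimately show ?case by (simp add: n_def)
  qed
  show ?thesis
  proof (intro allI impI)
    fix m' :: nat assume "m' \<ge> 1"
    show "Lcode m \<theta> \<le> Lcode m' \<theta>"
    proof (cases "m \<le> m'")
      case True then show ?thesis by (rule up)
    next
      case False
      hence "m - m' < m" "m - (m - m') = m'" using \<open>m' \<ge> 1\<close> by auto
      then show ?thesis using down[of "m - m'"] by simp
    qed
  qed
qed

end
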